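(* Let $K$ be a positive integer, let $T>0$, and set $\omega_0 = \frac{2\pi}{T}$. Let $N$ be an integer and let $0\leq t_1<t_2<\cdots<t_N < T$. Define the $(N-1)\times 2K$ complex matrix $\mathbf{B}$ whose columns are indexed by $k\in\{-K,\dots,-1,1,\dots,K\}$ and whose rows are indexed by $n\in\{1,\dots,N-1\}$, with entries $$\mathbf{B}_{n,k} = e^{jk\omega_0 t_{n+1}} - e^{jk\omega_0 t_{n}} .$$ Then $\mathbf{B}$ is left-invertible (i.e., has full column rank) provided that $N \geq 2K+2$.
   Context: Here $j$ denotes the imaginary unit. *)

theory Defs
  imports "HOL-Analysis.Analysis" "Jordan_Normal_Form.Matrix"
begin

text \<open>Column index i in {0..<2K} corresponds to the frequency index
  k in {-K,...,-1,1,...,K} (in increasing order).\<close>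
definition freq_index :: "nat \<Rightarrow> nat \<Rightarrow> int" where
  "freq_index K i = (if i < K then int i - int K else int i - int K + 1)"

text \<open>The (N-1) x 2K matrix B; row i (0-based) corresponds to n = i+1,
  sampling times t 1, ..., t N.\<close>
definition Bmat :: "nat \<Rightarrow> real \<Rightarrow> nat \<Rightarrow> (nat \<Rightarrow> real) \<Rightarrow> complex mat" where
  "Bmat K T N t = mat (N - 1) (2 * K) (\<lambda>(i, l).
      let k = freq_index K l; \<omega>\<^sub>0 = 2 * pi / T; n = i + 1 in
      exp (\<i> * of_int k * of_real (\<omega>\<^sub>0 * t (n + 1))) - exp (\<i> * of_int k * of_real (\<omega>\<^sub>0 * t n)))"

end

theory Submission imports Defs "HOL-Computational_Algebra.Polynomial" "Jordan_Normal_Form.Determinant" begin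

definition idx :: "nat \<Rightarrow> nat \<Rightarrow> nat" where
  "idx K l = (if l < K then l else Suc l)"

lemma poly_key:
  fixes v w :: "nat \<Rightarrow> complex" and K :: nat and c :: complex
  assumes inj: "inj_on w {0..2*K}"
    and eq: "\<And>n. n \<le> 2*K \<Longrightarrow> (\<Sum>l<2*K. v l * w n ^ idx K l) = c * w n ^ K"
  shows "\<forall>l<2*K. v l = 0"
proof -
  define q where "q = (\<Sum>l<2*K. monom (v l) (idx K l)) - monom c K"
  have cq: "coeff q m = (\<Sum>l<2*K. if idx K l = m then v l else 0) - (if K = m then c else 0)" for m
    unfolding q_def by (simp add: coeff_sum coeff_monom)
  have pq: "poly q z = (\<Sum>l<2*K. v l * z ^ idx K l) - c * z ^ K" for z
    unfolding q_def by (simp add: poly_sum poly_monom)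
  have "q = 0"
  proof (rule ccontr)
    assume nz: "q \<noteq> 0"
    have "degree q \<le> 2*K"
    proof (rule degree_le, intro allI impI)
      fix m assume "2*K < m"
      then have "\<And>l. l < 2*K \<Longrightarrow> idx K l \<noteq> m" "K \<noteq> m" by (auto simp: idx_def)
      then show "coeff q m = 0" unfolding cq by simp
    qed
    moreover have "w ` {0..2*K} \<subseteq> {x. poly q x = 0}"
      using eq by (auto simp: pq)
    then have "card (w ` {0..2*K}) \<le> card {x. poly q x = 0}"
      using poly_roots_finite[OF nz] by (intro card_mono) auto
    moreover have "card (w ` {0..2*K}) = 2*K+1" using card_image[OF inj] by simp
    ultimately show False using card_poly_roots_bound[OF nz] by linarith
  qed
  show ?thesis
  proof (intro allI impI)
    fix l assume l: "l < 2*K"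
    have "coeff q (idx K l) = 0" using \<open>q = 0\<close> by simp
    moreover have "(\<Sum>l'<2*K. if idx K l' = idx K l then v l' else 0) = (\<Sum>l'\<in>{l}. v l')"
      using l by (intro sum.mono_neutral_cong_right) (auto simp: idx_def split: if_splits)
    moreover have "K \<noteq> idx K l" by (auto simp: idx_def)
    ultimately show "v l = 0" unfolding cq by simp
  qed
qed

lemma exp_shift:
  fixes y :: real
  shows "exp (\<i> * of_int (freq_index K l) * of_real y) * exp (\<i> * of_real y) ^ K
         = exp (\<i> * of_real y) ^ idx K l"
proof -
  have h: "(of_int (freq_index K l) :: complex) + of_nat K = of_nat (idx K l)"
    by (simp add: freq_index_def idx_def)
  have "exp (\<i> * of_int (freq_index K l) * of_real y) * exp (\<i> * of_real y) ^ K
      = exp (\<i> * of_int (freq_index K l) * of_real y + of_nat K * (\<i> * of_real y))"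
    by (simp add: exp_add exp_of_nat_mult)
  also have "\<i> * of_int (freq_index K l) * of_real y + of_nat K * (\<i> * of_real y)
      = ((of_int (freq_index K l) :: complex) + of_nat K) * (\<i> * of_real y)"
    by (simp add: algebra_simps)
  also have "exp \<dots> = exp (\<i> * of_real y) ^ idx K l"
    unfolding h by (simp add: exp_of_nat_mult)
  finally show ?thesis .
qed

lemma exp_inj_interval:
  fixes a b :: real
  assumes "0 \<le> a" "a < 2*pi" "0 \<le> b" "b < 2*pi"
    and "exp (\<i> * of_real a) = exp (\<i> * of_real b)"
  shows "a = b"
proof -
  from assms(5) obtain n :: int where n: "\<i> * of_real a = \<i> * of_real b + (of_int (2 * n) * pi) * \<i>"
    unfolding exp_eq by blast
  have "a = b + 2 * n * pi"
  proof -
    have "Im (\<i> * of_real a) = Im (\<i> * of_real b + (of_int (2 * n) * pi) * \<i>)" using n by simp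
    then show ?thesis by simp
  qed
  moreover have "n = 0"
  proof (rule ccontr)
    assume "n \<noteq> 0"
    then have "n \<ge> 1 \<or> n \<le> -1" by linarith
    then show False
    proof
      assume "n \<ge> 1" then have "real_of_int n * pi \<ge> pi" by simp
      then show False using \<open>a = b + 2 * n * pi\<close> assms by linarith
    next
      assume "n \<le> -1" then have "real_of_int n * pi \<le> - pi"
        using mult_right_mono[of "real_of_int n" "-1" pi] pi_gt_zero by simp
      then show False using \<open>a = b + 2 * n * pi\<close> assms by linarith
    qed
  qed
  ultimately show ?thesis by simp
qed

lemma strict_t:
  fixes t :: "nat \<Rightarrow> real"
  assumes "\<And>n. 1 \<le> n \<Longrightarrow> n < N \<Longrightarrow> t n < t (Suc n)"
  shows "1 \<le> m \<Longrightarrow> m < n \<Longrightarrow> n \<le> N \<Longrightarrow> t m < t n"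
proof (induction n)
  case 0 then show ?case by simp
next
  case (Suc n)
  show ?case
  proof (cases "m = n")
    case True then show ?thesis using assms Suc.prems by auto
  next
    case False
    then have "t m < t n" using Suc by auto
    also have "t n < t (Suc n)" using assms Suc.prems False by auto
    finally show ?thesis .
  qed
qed

theorem theorem3:
  fixes K N :: nat and T :: real and t :: "nat \<Rightarrow> real"
  assumes "K \<ge> 1" and "T > 0"
    and "0 \<le> t 1"
    and "\<And>n. 1 \<le> n \<Longrightarrow> n < N \<Longrightarrow> t n < t (Suc n)"
    and "t N < T"
    and "N \<ge> 2 * K + 2"
  shows "\<exists>C \<in> carrier_mat (2 * K) (N - 1). C * Bmat K T N t = 1\<^sub>m (2 * K)"
proof -
  have st: "\<And>m n. 1 \<le> m \<Longrightarrow> m < n \<Longrightarrow> n \<le> N \<Longrightarrow> t m < t n"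
    using strict_t[of N t] assms(4) by blast
  define B where "B = Bmat K T N t"
  define x where "x n = 2 * pi / T * t n" for n
  define E where "E n k = exp (\<i> * of_int k * of_real (x n))" for n k
  have Bc: "B \<in> carrier_mat (N - 1) (2 * K)" unfolding B_def Bmat_def by simp
  have Bent: "B $$ (i, l) = E (i + 2) (freq_index K l) - E (i + 1) (freq_index K l)"
    if "i < N - 1" "l < 2 * K" for i l
    using that unfolding B_def Bmat_def E_def x_def by (simp add: Let_def)
  define S :: "complex mat" where "S = mat (2 * K) (N - 1) (\<lambda>(i, j). if i = j then 1 else 0)"
  define A :: "complex mat" where "A = mat (2 * K) (2 * K) (\<lambda>(i, l). B $$ (i, l))"
  have Sc: "S \<in> carrier_mat (2 * K) (N - 1)" unfolding S_def by simp
  have Ac: "A \<in> carrier_mat (2 * K) (2 * K)" unfolding A_def by simp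
  have SB: "S * B = A"
  proof (rule eq_matI)
    fix i l assume i: "i < dim_row A" and l: "l < dim_col A"
    then have i': "i < 2 * K" "i < N - 1" and l': "l < 2 * K" using Ac assms(6) by auto
    have "(S * B) $$ (i, l) = (\<Sum>j\<in>{0..<N - 1}. S $$ (i, j) * B $$ (j, l))"
      using Sc Bc i' l' by (simp add: index_mult_mat scalar_prod_def)
    also have "\<dots> = (\<Sum>j\<in>{i}. B $$ (j, l))"
      using i' unfolding S_def by (intro sum.mono_neutral_cong_right) auto
    also have "\<dots> = A $$ (i, l)" using i' l' unfolding A_def by simp
    finally show "(S * B) $$ (i, l) = A $$ (i, l)" .
  qed (use Sc Bc Ac in auto)
  have detA: "Determinant.det A \<noteq> 0"
  proof
    assume "Determinant.det A = 0"
    then obtain v where v: "v \<in> carrier_vec (2*K)" "v \<noteq> 0\<^sub>v (2*K)" "A *\<^sub>v v = 0\<^sub>v (2*K)"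
      using det_0_iff_vec_prod_zero_field[OF Ac] by blast
    have row: "(\<Sum>l<2*K. B $$ (i,l) * v $ l) = 0" if "i < 2*K" for i
    proof -
      have "(A *\<^sub>v v) $ i = 0" using v(3) that by simp
      then show ?thesis using that v(1) Ac unfolding A_def
        by (simp add: scalar_prod_def lessThan_atLeast0)
    qed
    define f where "f n = (\<Sum>l<2*K. v $ l * E n (freq_index K l))" for n
    have step: "f (i+2) = f (i+1)" if "i < 2*K" for i
    proof -
      have "(\<Sum>l<2*K. B $$ (i,l) * v $ l) = f (i+2) - f (i+1)"
        unfolding f_def sum_subtractf[symmetric] using that assms(6)
        by (intro sum.cong) (auto simp: Bent algebra_simps)
      then show ?thesis using row[OF that] by simp
    qed
    have fconst: "f (n+1) = f 1" if "n \<le> 2*K" for n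
      using that
    proof (induction n)
      case 0 show ?case by simp
    next
      case (Suc n) then show ?case using step[of n] by simp
    qed
    define w where "w n = exp (\<i> * of_real (x (n+1)))" for n
    have "\<forall>l<2*K. v $ l = 0"
    proof (rule poly_key[of w K "\<lambda>l. v $ l" "f 1"])
      show "inj_on w {0..2*K}"
      proof (rule inj_onI)
        fix m n assume m: "m \<in> {0..2*K}" and n: "n \<in> {0..2*K}" and e: "w m = w n"
        have bnd: "0 \<le> x j \<and> x j < 2*pi" if "1 \<le> j" "j \<le> N" for j
        proof -
          have "t 1 \<le> t j" using st[of 1 j] that by (cases "j = 1") auto
          moreover have "t j \<le> t N" using st[of j N] that by (cases "j = N") auto
          ultimately have "0 \<le> t j" "t j < T" using assms by auto
          then show ?thesis unfolding x_def using assms(2) by (auto simp: field_simps)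
        qed
        have "x (m+1) = x (n+1)"
          using exp_inj_interval bnd[of "m+1"] bnd[of "n+1"] m n assms(6) e unfolding w_def by auto
        then have "t (m+1) = t (n+1)" unfolding x_def using assms(2) by simp
        then show "m = n"
          using st[of "m+1" "n+1"] st[of "n+1" "m+1"] m n assms(6)
          by (cases "m < n"; cases "n < m") auto
      qed
    next
      fix n assume n: "n \<le> 2*K"
      have "(\<Sum>l<2*K. v $ l * w n ^ idx K l) = (\<Sum>l<2*K. v $ l * E (n+1) (freq_index K l) * w n ^ K)"
        unfolding w_def E_def by (intro sum.cong refl) (simp add: exp_shift[symmetric] mult.assoc)
      also have "\<dots> = f (n+1) * w n ^ K" unfolding f_def by (simp add: sum_distrib_right)
      finally show "(\<Sum>l<2*K. v $ l * w n ^ idx K l) = f 1 * w n ^ K" using fconst[OF n] by simp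
    qed
    then have "v = 0\<^sub>v (2*K)" using v(1) by (intro eq_vecI) auto
    with v(2) show False by simp
  qed
  from det_non_zero_imp_unit[OF Ac detA, of "()"]
  obtain B' where B'c: "B' \<in> carrier_mat (2*K) (2*K)" and B'A: "B' * A = 1\<^sub>m (2*K)"
    unfolding Units_def ring_mat_def by auto
  show ?thesis
  proof (intro bexI)
    show "B' * S \<in> carrier_mat (2*K) (N-1)" using B'c Sc by simp
    have "B' * S * Bmat K T N t = B' * (S * B)" unfolding B_def using B'c Sc Bc B_def
      by (simp add: assoc_mult_mat)
    then show "B' * S * Bmat K T N t = 1\<^sub>m (2*K)" using SB B'A by simp
  qed
qed

end
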